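(* Let $X$ be a topological space, let $(S,\mathcal S)$ be an $\alpha$-scaffold in $X$, and let $\mathcal U$ be a collection of open subsets of $X$ with $|\mathcal U|<\mathfrak b$. Then there exists $S'\le_{\mathcal S}S$ such that every $U\in\mathcal U$ with $\mathrm{cor}\,S'\in U$ contains all but finitely many $T\in\mathcal S'^-$, where $\mathcal S'$ is the stratification of $S'$ witnessing $S'\le_{\mathcal S}S$.
   Context: $\mathfrak b$ is the least cardinality of an unbounded (with respect to eventual domination) family in $\omega^\omega$. Scaffolds in a space $X$ are defined by recursion. A pair $(S,\mathcal S)$ with $S\subseteq X$, $\mathcal S\subseteq 2^S$ is: (S.0) a $0$-scaffold if $S=\{x\}$, $\mathcal S=\{S\}$; then $\mathrm{ht}(S)=\mathrm{ht}_S(x)=0$ and $\mathrm{cor}\,S=x$. (S.1) an $\alpha$-scaffold if there are $x\in S$, pairwise disjoint open sets $U_n\subseteq X$, and $\alpha_n$-scaffolds $(S_n,\mathcal S_n)$ $(n\in\omega)$ with $(\alpha_n)$ nondecreasing, $\alpha=\min\{\beta:\beta>\alpha_n\text{ for all }n\}$, $\mathrm{cor}\,S_n\to x$, $\overline{S_n}\subseteq U_n$, $x\notin\overline{U_n}$, $S=\{x\}\cup\bigcup_nS_n$, $\mathcal S=\{S\}\cup\bigcup_n\mathcal S_n$; then $\mathrm{ht}(S)=\mathrm{ht}_S(x)=\alpha$, $\mathrm{ht}_S(x')=\mathrm{ht}_{S_n}(x')$ for $x'\in S_n$, and $\mathrm{cor}\,S=x$. $\mathcal S$ is called a stratification of $S$.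 For $S''\in\mathcal S$ let $\mathcal S|_{S''}=\{T\in\mathcal S:T\subseteq S''\}$. $\mathcal S^-$ is the set of $\subseteq$-maximal elements of $\mathcal S\setminus\{S\}$. Proper subscaffolds are defined recursively: for $S'\subseteq S$, $S'\le_{\mathcal S}S$ means $\mathrm{cor}\,S'=\mathrm{cor}\,S$ and there is a stratification $\mathcal S'$ of $S'$ such that $\mathcal S'^-\ne\emptyset$ whenever $\mathcal S^-\neq\emptyset$, and each $\beta$-scaffold $B'\in\mathcal S'^-$ satisfies $B'\le_{\mathcal S|_B}B$ for some $\beta$-scaffold $B\in\mathcal S^-$. *)

theory Defs
  imports "HOL-Analysis.Analysis"
begin

(* Ordinals are represented as well-orders on subsets of nat (all scaffold heights are
   countable ordinals), compared with the library's <o, <=o, =o. *)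

definition least_strict_ub :: "nat rel \<Rightarrow> (nat \<Rightarrow> nat rel) \<Rightarrow> bool" where
  "least_strict_ub \<alpha> \<alpha>s \<longleftrightarrow> Well_order \<alpha> \<and> (\<forall>n. ordLess2 (\<alpha>s n) \<alpha>) \<and>
     (\<forall>\<beta>::nat rel. Well_order \<beta> \<and> (\<forall>n. ordLess2 (\<alpha>s n) \<beta>) \<longrightarrow> ordLeq2 \<alpha> \<beta>)"

(* scaffold X \<alpha> x S SS : (S,SS) is an \<alpha>-scaffold in X with cor S = x *)
inductive scaffold :: "'a topology \<Rightarrow> nat rel \<Rightarrow> 'a \<Rightarrow> 'a set \<Rightarrow> 'a set set \<Rightarrow> bool"
  for X :: "'a topology" where
  zero: "\<lbrakk> Well_order \<alpha>; Field \<alpha> = {}; x \<in> topspace X \<rbrakk> \<Longrightarrow> scaffold X \<alpha> x {x} {{x}}"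
| step: "\<lbrakk> \<And>n. scaffold X (\<alpha>s n) (xs n) (Ss n) (SSs n);
           \<And>n. ordLeq2 (\<alpha>s n) (\<alpha>s (Suc n));
           least_strict_ub \<alpha> \<alpha>s;
           x \<in> topspace X;
           limitin X xs x sequentially;
           \<And>n. openin X (Us n);
           \<And>m n. m \<noteq> n \<Longrightarrow> Us m \<inter> Us n = {};
           \<And>n. X closure_of (Ss n) \<subseteq> Us n;
           \<And>n. x \<notin> X closure_of (Us n) \<rbrakk>
         \<Longrightarrow> scaffold X \<alpha> x ({x} \<union> (\<Union>n. Ss n)) ({{x} \<union> (\<Union>n. Ss n)} \<union> (\<Union>n. SSs n))"

definition is_scaffold :: "'a topology \<Rightarrow> nat rel \<Rightarrow> 'a set \<Rightarrow> 'a set set \<Rightarrow> bool" where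
  "is_scaffold X \<alpha> S SS \<longleftrightarrow> (\<exists>x. scaffold X \<alpha> x S SS)"

definition stratification :: "'a topology \<Rightarrow> 'a set \<Rightarrow> 'a set set \<Rightarrow> bool" where
  "stratification X S SS \<longleftrightarrow> (\<exists>\<alpha> x. scaffold X \<alpha> x S SS)"

definition cor :: "'a topology \<Rightarrow> 'a set \<Rightarrow> 'a set set \<Rightarrow> 'a" where
  "cor X S SS = (THE x. \<exists>\<alpha>. scaffold X \<alpha> x S SS)"

definition restr :: "'a set set \<Rightarrow> 'a set \<Rightarrow> 'a set set" where
  "restr SS T = {T' \<in> SS. T' \<subseteq> T}"

definition minus_strat :: "'a set \<Rightarrow> 'a set set \<Rightarrow> 'a set set" where
  "minus_strat S SS = {T \<in> SS - {S}. \<forall>T' \<in> SS - {S}. T \<subseteq> T' \<longrightarrow> T' = T}"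

(* subscaf X S' SS' S SS : S' \<le>_SS S, witnessed by the stratification SS' of S' *)
inductive subscaf :: "'a topology \<Rightarrow> 'a set \<Rightarrow> 'a set set \<Rightarrow> 'a set \<Rightarrow> 'a set set \<Rightarrow> bool"
  for X :: "'a topology" where
  "\<lbrakk> S' \<subseteq> S;
     stratification X S' SS';
     cor X S' SS' = cor X S SS;
     minus_strat S SS \<noteq> {} \<longrightarrow> minus_strat S' SS' \<noteq> {};
     \<forall>B' \<in> minus_strat S' SS'. \<forall>\<beta>. is_scaffold X \<beta> B' (restr SS' B') \<longrightarrow>
        (\<exists>B \<in> minus_strat S SS. is_scaffold X \<beta> B (restr SS B) \<and>
             subscaf X B' (restr SS' B') B (restr SS B)) \<rbrakk>
   \<Longrightarrow> subscaf X S' SS' S SS"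

definition ev_dom :: "(nat \<Rightarrow> nat) \<Rightarrow> (nat \<Rightarrow> nat) \<Rightarrow> bool" where
  "ev_dom f g \<longleftrightarrow> (\<forall>\<^sub>F n in sequentially. f n \<le> g n)"

definition unbounded_family :: "(nat \<Rightarrow> nat) set \<Rightarrow> bool" where
  "unbounded_family F \<longleftrightarrow> \<not> (\<exists>g. \<forall>f \<in> F. ev_dom f g)"

(* |A| < \<bb>, where \<bb> is the least cardinality of an unbounded family *)
definition card_less_b :: "'b set \<Rightarrow> bool" where
  "card_less_b A \<longleftrightarrow> (\<forall>F. unbounded_family F \<longrightarrow> ordLess2 (card_of A) (card_of F))"

end

theory Submission
  imports Defs
begin


lemma scaf_basic:
  assumes "scaffold X \<alpha> x S SS"
  shows "S \<subseteq> topspace X \<and> S \<in> SS \<and> (\<forall>T\<in>SS. T \<subseteq> S \<and> T \<noteq> {}) \<and> x \<in> S \<and> Well_order \<alpha>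
         \<and> S - \<Union>(SS - {S}) = {x}"
  using assms
proof induction
  case (zero \<alpha> x)
  then show ?case by auto
next
  case (step \<alpha>s xs Ss SSs \<alpha> x Us)
  have I1: "Ss n \<subseteq> topspace X" for n using step(10)[of n] by (elim conjE)
  have I2: "Ss n \<in> SSs n" for n using step(10)[of n] by (elim conjE)
  have I3: "\<forall>T\<in>SSs n. T \<subseteq> Ss n \<and> T \<noteq> {}" for n using step(10)[of n] by (elim conjE)
  have sub: "Ss n \<subseteq> Us n" for n
    using I1[of n] closure_of_subset[of "Ss n" X] step(8)[of n] by blast
  have xn: "x \<notin> Ss n" for n
    using sub[of n] step(9)[of n] closure_of_subset[of "Us n" X] openin_subset[OF step(6)[of n]] by blast
  have wo: "Well_order \<alpha>" using step(3) unfolding least_strict_ub_def by blast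
  let ?S = "{x} \<union> (\<Union>n. Ss n)"
  have neq: "T \<noteq> ?S" if "T \<in> SSs n" for T n
    using I3[of n] that xn[of n] by blast
  have cov: "\<Union>((\<Union>n. SSs n)) = (\<Union>n. Ss n)"
  proof
    show "\<Union>((\<Union>n. SSs n)) \<subseteq> (\<Union>n. Ss n)" using I3 by fast
    show "(\<Union>n. Ss n) \<subseteq> \<Union>((\<Union>n. SSs n))"
    proof
      fix y assume "y \<in> (\<Union>n. Ss n)"
      then obtain n where "y \<in> Ss n" by blast
      moreover have "Ss n \<in> SSs n" using I2 by blast
      ultimately show "y \<in> \<Union>((\<Union>n. SSs n))" by blast
    qed
  qed
  have "?S - \<Union>(({?S} \<union> (\<Union>n. SSs n)) - {?S}) = {x}"
  proof -
    have "({?S} \<union> (\<Union>n. SSs n)) - {?S} = (\<Union>n. SSs n)" using neq by blast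
    moreover have "?S - (\<Union>n. Ss n) = {x}" using xn by blast
    ultimately show ?thesis using cov by simp
  qed
  moreover have "?S \<subseteq> topspace X" using I1 step(4) by blast
  moreover have "\<forall>T\<in>({?S} \<union> (\<Union>n. SSs n)). T \<subseteq> ?S \<and> T \<noteq> {}"
  proof
    fix T assume "T \<in> ({?S} \<union> (\<Union>n. SSs n))"
    then consider "T = ?S" | n where "T \<in> SSs n" by blast
    then show "T \<subseteq> ?S \<and> T \<noteq> {}"
    proof cases
      case 2 then show ?thesis using I3[of n] by blast
    next
      case 1 then show ?thesis by blast
    qed
  qed
  moreover have "?S \<in> {?S} \<union> (\<Union>n. SSs n)" by blast
  moreover have "x \<in> ?S" by blast
  ultimately show ?case using wo by (intro conjI) assumption+
qed





lemma step_facts: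
  assumes sc: "\<And>n. scaffold X (\<alpha>s n) (xs n) (Ss n) (SSs n)"
    and op: "\<And>n. openin X (Us n)" and dj: "\<And>m n. m\<noteq>n \<Longrightarrow> Us m \<inter> Us n = {}"
    and cl: "\<And>n. X closure_of (Ss n) \<subseteq> Us n" and nx: "\<And>n. x \<notin> X closure_of (Us n)"
  shows "minus_strat ({x} \<union> (\<Union>n. Ss n)) ({{x} \<union> (\<Union>n. Ss n)} \<union> (\<Union>n. SSs n)) = range Ss"
    and "restr ({{x} \<union> (\<Union>n. Ss n)} \<union> (\<Union>n. SSs n)) (Ss n) = SSs n"
    and "inj Ss" and "x \<notin> Ss n"
    and "\<And>m n. m \<noteq> n \<Longrightarrow> Ss m \<inter> Ss n = {}"
proof -
  have sub: "Ss n \<subseteq> Us n" for n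
    using scaf_basic[OF sc[of n]] closure_of_subset[of "Ss n" X] cl[of n] by blast
  show xn: "x \<notin> Ss n" for n
    using sub[of n] nx[of n] closure_of_subset[of "Us n" X] openin_subset[OF op[of n]] by blast
  have ne: "Ss n \<noteq> {}" for n using scaf_basic[OF sc[of n]] by blast
  show dS: "Ss m \<inter> Ss n = {}" if "m \<noteq> n" for m n using sub[of m] sub[of n] dj[OF that] by blast
  show "inj Ss"
  proof (rule injI)
    fix m n assume "Ss m = Ss n"
    then show "m = n" using dS[of m n] ne[of n] by auto
  qed
  have Tsub: "T \<subseteq> Ss n \<and> T \<noteq> {}" if "T \<in> SSs n" for T n
    using scaf_basic[OF sc[of n]] that by blast
  have SsIn: "Ss n \<in> SSs n" for n using scaf_basic[OF sc[of n]] by blast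
  let ?S = "{x} \<union> (\<Union>n. Ss n)"
  have neq: "T \<noteq> ?S" if "T \<in> SSs n" for T n
    using Tsub[OF that] xn[of n] by blast
  have D: "({?S} \<union> (\<Union>n. SSs n)) - {?S} = (\<Union>n. SSs n)" using neq by blast
  show "restr ({?S} \<union> (\<Union>n. SSs n)) (Ss n) = SSs n"
  proof
    show "restr ({?S} \<union> (\<Union>n. SSs n)) (Ss n) \<subseteq> SSs n"
    proof
      fix T assume T: "T \<in> restr ({?S} \<union> (\<Union>n. SSs n)) (Ss n)"
      then have T1: "T \<subseteq> Ss n" and T2: "T \<in> {?S} \<union> (\<Union>n. SSs n)" unfolding restr_def by auto
      have "T \<noteq> ?S" using T1 xn[of n] by blast
      with T2 obtain m where m: "T \<in> SSs m" by blast
      then have "m = n" using Tsub[OF m] T1 dS[of m n] by blast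
      then show "T \<in> SSs n" using m by simp
    qed
    show "SSs n \<subseteq> restr ({?S} \<union> (\<Union>n. SSs n)) (Ss n)"
      unfolding restr_def using Tsub by blast
  qed
  show "minus_strat ?S ({?S} \<union> (\<Union>n. SSs n)) = range Ss"
    unfolding minus_strat_def D
  proof
    show "{T \<in> \<Union> (range SSs). \<forall>T'\<in>\<Union> (range SSs). T \<subseteq> T' \<longrightarrow> T' = T} \<subseteq> range Ss"
    proof
      fix T assume "T \<in> {T \<in> \<Union> (range SSs). \<forall>T'\<in>\<Union> (range SSs). T \<subseteq> T' \<longrightarrow> T' = T}"
      then obtain n where n: "T \<in> SSs n" and mx: "\<forall>T'\<in>\<Union> (range SSs). T \<subseteq> T' \<longrightarrow> T' = T" by blast
      have "Ss n = T" using mx SsIn[of n] Tsub[OF n] by blast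
      then show "T \<in> range Ss" by blast
    qed
    show "range Ss \<subseteq> {T \<in> \<Union> (range SSs). \<forall>T'\<in>\<Union> (range SSs). T \<subseteq> T' \<longrightarrow> T' = T}"
    proof
      fix T assume "T \<in> range Ss"
      then obtain n where n: "T = Ss n" by blast
      have "T' = T" if h1: "T' \<in> \<Union> (range SSs)" and h2: "T \<subseteq> T'" for T'
      proof -
        obtain m where m: "T' \<in> SSs m" using h1 by blast
        have "m = n" using Tsub[OF m] h2 n ne[of n] dS[of m n] by blast
        then show ?thesis using Tsub[OF m] h2 n by blast
      qed
      then show "T \<in> {T \<in> \<Union> (range SSs). \<forall>T'\<in>\<Union> (range SSs). T \<subseteq> T' \<longrightarrow> T' = T}"
        using n SsIn by blast
    qed
  qed
qed

lemma cor_eq: "scaffold X \<alpha> x S SS \<Longrightarrow> cor X S SS = x"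
  unfolding cor_def
proof (rule the_equality)
  assume "scaffold X \<alpha> x S SS" then show "\<exists>\<alpha>. scaffold X \<alpha> x S SS" by blast
next
  fix y assume a: "scaffold X \<alpha> x S SS" and "\<exists>\<alpha>. scaffold X \<alpha> y S SS"
  then obtain \<beta> where "scaffold X \<beta> y S SS" by blast
  then show "y = x" using scaf_basic[OF a] scaf_basic[of X \<beta> y S SS] by auto
qed

lemma core_unique: "scaffold X \<alpha> x S SS \<Longrightarrow> scaffold X \<beta> y S SS \<Longrightarrow> x = y"
  using scaf_basic[of X \<alpha> x S SS] scaf_basic[of X \<beta> y S SS] by auto





lemma empty_field_iso:
  assumes "Well_order r" "Well_order r'" "Field r = {}" "Field r' = {}"
  shows "ordIso2 r r'"
  using assms unfolding ordIso_def iso_def embed_def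
  by (auto intro!: exI[of _ id] simp: bij_betw_def)

lemma scaf_transport:
  assumes "scaffold X \<gamma> w B BB" "ordIso2 \<gamma> \<beta>"
  shows "scaffold X \<beta> w B BB"
  using assms(1)
proof cases
  case (zero)
  have wo: "Well_order \<beta>" using assms(2) unfolding ordIso_def by auto
  obtain f where "bij_betw f (Field \<gamma>) (Field \<beta>)" using assms(2) unfolding ordIso_def iso_def by auto
  then have "Field \<beta> = {}" using zero by (auto simp: bij_betw_def)
  then show ?thesis using zero wo by (auto intro: scaffold.zero)
next
  case (step \<alpha>s xs Ss SSs Us)
  have "least_strict_ub \<beta> \<alpha>s"
  proof -
    have wo: "Well_order \<beta>" using assms(2) unfolding ordIso_def by auto
    have l: "ordLess2 (\<alpha>s n) \<beta>" for n
      using step(5) assms(2) ordLess_ordIso_trans unfolding least_strict_ub_def by blast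
    have "ordLeq2 \<beta> \<delta>" if "Well_order \<delta>" "\<forall>n. ordLess2 (\<alpha>s n) \<delta>" for \<delta> :: "nat rel"
    proof -
      have "ordLeq2 \<gamma> \<delta>" using step(5) that unfolding least_strict_ub_def by blast
      then show ?thesis using ordIso_symmetric[OF assms(2)] ordIso_ordLeq_trans by blast
    qed
    then show ?thesis using wo l unfolding least_strict_ub_def by blast
  qed
  then show ?thesis unfolding step(1,2) by (rule scaffold.step[OF step(3) step(4) _ step(6-11)])
qed

lemma scaf_SS_single:
  assumes "scaffold X \<alpha> x S SS" "SS = {S}"
  shows "Field \<alpha> = {}"
  using assms(1)
proof cases
  case (zero) then show ?thesis by simp
next
  case (step \<alpha>s xs Ss SSs Us)
  have "Ss 0 \<in> SSs 0" using scaf_basic[OF step(3)[of 0]] by blast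
  then have "Ss 0 = S" using assms(2) step(2) by blast
  moreover have "x \<notin> Ss 0" using step_facts(4)[OF step(3) step(8) step(9) step(10) step(11)] .
  moreover have "x \<in> S" using scaf_basic[OF assms(1)] by blast
  ultimately show ?thesis by blast
qed



lemma height_unique:
  "scaffold X \<beta> y A AA \<Longrightarrow> scaffold X \<gamma> z A AA \<Longrightarrow> ordIso2 \<beta> \<gamma>"
proof (induction arbitrary: \<gamma> z rule: scaffold.induct)
  case (zero \<alpha> x)
  have "Field \<gamma> = {}" by (rule scaf_SS_single[OF zero.prems]) simp
  moreover have "Well_order \<gamma>" using scaf_basic[OF zero.prems] by (elim conjE)
  ultimately show ?case using empty_field_iso zero.hyps(1,2) by blast
next
  case (step \<alpha>s xs Ss SSs \<alpha> x Us)
  have h1: "\<And>n. scaffold X (\<alpha>s n) (xs n) (Ss n) (SSs n)" by fact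
  have h2: "\<And>n. ordLeq2 (\<alpha>s n) (\<alpha>s (Suc n))" by fact
  have h3: "least_strict_ub \<alpha> \<alpha>s" by fact
  have h4: "x \<in> topspace X" by fact
  have h5: "limitin X xs x sequentially" by fact
  have h6: "\<And>n. openin X (Us n)" by fact
  have h7: "\<And>m n. m \<noteq> n \<Longrightarrow> Us m \<inter> Us n = {}" by fact
  have h8: "\<And>n. X closure_of (Ss n) \<subseteq> Us n" by fact
  have h9: "\<And>n. x \<notin> X closure_of (Us n)" by fact
  note H = h1 h2 h3 h4 h5 h6 h7 h8 h9
  have IH: "\<And>n \<gamma> z. scaffold X \<gamma> z (Ss n) (SSs n) \<Longrightarrow> ordIso2 (\<alpha>s n) \<gamma>" by fact
  note P = step.prems
  let ?A = "{x} \<union> (\<Union>n. Ss n)"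
  let ?AA = "{?A} \<union> (\<Union>n. SSs n)"
  note SF = step_facts[where X=X and \<alpha>s=\<alpha>s and xs=xs and Ss=Ss and SSs=SSs and Us=Us and x=x, OF H(1) H(6,7,8,9)]
  have first: "scaffold X \<alpha> x ?A ?AA" by (rule scaffold.step[OF H])
  have ne: "?AA \<noteq> {?A}"
  proof
    assume a: "?AA = {?A}"
    have s0: "scaffold X (\<alpha>s 0) (xs 0) (Ss 0) (SSs 0)" by (rule H(1))
    have "Ss 0 \<in> SSs 0" using scaf_basic[OF s0] by (elim conjE)
    then have "Ss 0 = ?A" using a by blast
    moreover have "x \<notin> Ss 0" by (rule SF(4))
    ultimately show False by blast
  qed
  from P show ?case
  proof cases
    case zero
    have "?AA = {?A}" by (subst zero(2), subst zero(1), rule refl)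
    then show ?thesis using ne by blast
  next
    case (step \<alpha>s' xs' Ss' SSs' Us')
    note H' = step
    have zx: "z = x" using core_unique[OF first P] by simp
    note SF' = step_facts[where X=X and \<alpha>s=\<alpha>s' and xs=xs' and Ss=Ss' and SSs=SSs' and Us=Us' and x=z, OF H'(3) H'(8-11)]
    have "minus_strat ?A ?AA = minus_strat ({z} \<union> (\<Union>n. Ss' n)) ({{z} \<union> (\<Union>n. Ss' n)} \<union> (\<Union>n. SSs' n))"
      by (rule arg_cong2[OF H'(1) H'(2)])
    then have ms: "range Ss = range Ss'"
      using SF(1) SF'(1) by simp
    have rs: "restr ?AA (Ss' m) = SSs' m" for m
      unfolding H'(2) by (rule SF'(2))
    have iso1: "\<exists>m. ordIso2 (\<alpha>s n) (\<alpha>s' m)" for n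
    proof -
      have "Ss n \<in> range Ss'" using ms by blast
      then obtain m where m: "Ss n = Ss' m" by blast
      have "SSs n = restr ?AA (Ss n)" by (rule SF(2)[symmetric])
      also have "\<dots> = restr ?AA (Ss' m)" by (simp only: m)
      also have "\<dots> = SSs' m" by (rule rs)
      finally have "SSs n = SSs' m" .
      then have "scaffold X (\<alpha>s' m) (xs' m) (Ss n) (SSs n)" using H'(3)[of m] m by simp
      then show ?thesis using IH[where n=n] by blast
    qed
    have iso2: "\<exists>n. ordIso2 (\<alpha>s n) (\<alpha>s' m)" for m
    proof -
      have "Ss' m \<in> range Ss" using ms by blast
      then obtain n where m: "Ss n = Ss' m" by blast
      have "SSs n = restr ?AA (Ss n)" by (rule SF(2)[symmetric])
      also have "\<dots> = restr ?AA (Ss' m)" by (simp only: m)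
      also have "\<dots> = SSs' m" by (rule rs)
      finally have "SSs n = SSs' m" .
      then have "scaffold X (\<alpha>s' m) (xs' m) (Ss n) (SSs n)" using H'(3)[of m] m by simp
      then show ?thesis using IH[where n=n] by blast
    qed
    have le1: "ordLeq2 \<alpha> \<gamma>"
    proof -
      have wg: "Well_order \<gamma>" using H'(5) unfolding least_strict_ub_def by blast
      have "ordLess2 (\<alpha>s n) \<gamma>" for n
      proof -
        obtain m where "ordIso2 (\<alpha>s n) (\<alpha>s' m)" using iso1 by blast
        moreover have "ordLess2 (\<alpha>s' m) \<gamma>" using H'(5) unfolding least_strict_ub_def by blast
        ultimately show ?thesis using ordIso_ordLess_trans by blast
      qed
      then show ?thesis using H(3) wg unfolding least_strict_ub_def by blast
    qed
    have le2: "ordLeq2 \<gamma> \<alpha>"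
    proof -
      have wg: "Well_order \<alpha>" using H(3) unfolding least_strict_ub_def by blast
      have "ordLess2 (\<alpha>s' m) \<alpha>" for m
      proof -
        obtain n where "ordIso2 (\<alpha>s n) (\<alpha>s' m)" using iso2 by blast
        moreover have "ordLess2 (\<alpha>s n) \<alpha>" using H(3) unfolding least_strict_ub_def by blast
        ultimately show ?thesis using ordIso_ordLess_trans ordIso_symmetric by blast
      qed
      then show ?thesis using H'(5) wg unfolding least_strict_ub_def by blast
    qed
    show ?thesis using le1 le2 ordIso_iff_ordLeq by blast
  qed
qed

lemma scaf_refl: "scaffold X \<alpha> x S SS \<Longrightarrow> subscaf X S SS S SS"
proof (induction rule: scaffold.induct)
  case (zero \<alpha> x)
  have "minus_strat {x} {{x}} = {}" unfolding minus_strat_def by auto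
  then show ?case using scaffold.zero[OF zero]
    by (intro subscaf.intros) (auto simp: stratification_def)
next
  case (step \<alpha>s xs Ss SSs \<alpha> x Us)
  let ?A = "{x} \<union> (\<Union>n. Ss n)"
  let ?AA = "{?A} \<union> (\<Union>n. SSs n)"
  have h1: "\<And>n. scaffold X (\<alpha>s n) (xs n) (Ss n) (SSs n)" by fact
  have h2: "\<And>n. ordLeq2 (\<alpha>s n) (\<alpha>s (Suc n))" by fact
  have h3: "least_strict_ub \<alpha> \<alpha>s" by fact
  have h4: "x \<in> topspace X" by fact
  have h5: "limitin X xs x sequentially" by fact
  have h6: "\<And>n. openin X (Us n)" by fact
  have h7: "\<And>m n. m \<noteq> n \<Longrightarrow> Us m \<inter> Us n = {}" by fact
  have h8: "\<And>n. X closure_of (Ss n) \<subseteq> Us n" by fact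
  have h9: "\<And>n. x \<notin> X closure_of (Us n)" by fact
  have h10: "\<And>n. subscaf X (Ss n) (SSs n) (Ss n) (SSs n)" by fact
  note SF = step_facts[where X=X and \<alpha>s=\<alpha>s and xs=xs and Ss=Ss and SSs=SSs and Us=Us and x=x, OF h1 h6 h7 h8 h9]
  have first: "scaffold X \<alpha> x ?A ?AA" by (rule scaffold.step[OF h1 h2 h3 h4 h5 h6 h7 h8 h9])
  show ?case
  proof (rule subscaf.intros)
    show "stratification X ?A ?AA" using first unfolding stratification_def by blast
    show "\<forall>B'\<in>minus_strat ?A ?AA. \<forall>\<beta>. is_scaffold X \<beta> B' (restr ?AA B') \<longrightarrow>
        (\<exists>B\<in>minus_strat ?A ?AA. is_scaffold X \<beta> B (restr ?AA B) \<and>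
             subscaf X B' (restr ?AA B') B (restr ?AA B))"
    proof (intro ballI allI impI)
      fix B' \<beta> assume b: "B' \<in> minus_strat ?A ?AA" and i: "is_scaffold X \<beta> B' (restr ?AA B')"
      have "B' \<in> range Ss" using b SF(1) by metis
      then obtain n where n: "B' = Ss n" by blast
      have "Ss n \<in> minus_strat ?A ?AA" using SF(1) by (metis rangeI)
      moreover have "is_scaffold X \<beta> (Ss n) (restr ?AA (Ss n))" using i n by simp
      moreover have "subscaf X (Ss n) (restr ?AA (Ss n)) (Ss n) (restr ?AA (Ss n))"
      proof -
        have e: "restr ?AA (Ss n) = SSs n" by (rule SF(2))
        show ?thesis using h10[of n] by (simp only: e)
      qed
      ultimately show "\<exists>B\<in>minus_strat ?A ?AA. is_scaffold X \<beta> B (restr ?AA B) \<and>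
             subscaf X B' (restr ?AA B') B (restr ?AA B)" using n by blast
    qed
  qed auto
qed

lemma subscaf_trans:
  "subscaf X A AA B BB \<Longrightarrow> subscaf X B BB C CC \<Longrightarrow> subscaf X A AA C CC"
proof (induction arbitrary: C CC rule: subscaf.induct)
  case (1 S' S SS' SS)
  note OH = "1.hyps"
  note OI = "1.IH"
  from "1.prems" show ?case
  proof cases
    case 1
    show ?thesis
    proof (rule subscaf.intros)
      show "S' \<subseteq> C" using OH(1) 1(1) by blast
      show "stratification X S' SS'" using OH(2) .
      show "cor X S' SS' = cor X C CC" using OH(3) 1(3) by simp
      show "minus_strat C CC \<noteq> {} \<longrightarrow> minus_strat S' SS' \<noteq> {}" using OH(4) 1(4) by blast
      show "\<forall>B'\<in>minus_strat S' SS'. \<forall>\<beta>. is_scaffold X \<beta> B' (restr SS' B') \<longrightarrow>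
        (\<exists>B\<in>minus_strat C CC. is_scaffold X \<beta> B (restr CC B) \<and>
             subscaf X B' (restr SS' B') B (restr CC B))"
      proof (intro ballI allI impI)
        fix B' \<beta> assume b: "B' \<in> minus_strat S' SS'" and i: "is_scaffold X \<beta> B' (restr SS' B')"
        obtain B1 where B1: "B1 \<in> minus_strat S SS" "is_scaffold X \<beta> B1 (restr SS B1)"
          "subscaf X B' (restr SS' B') B1 (restr SS B1)"
          "\<And>C CC. subscaf X B1 (restr SS B1) C CC \<Longrightarrow> subscaf X B' (restr SS' B') C CC"
          using OI b i by blast
        obtain B2 where B2: "B2 \<in> minus_strat C CC" "is_scaffold X \<beta> B2 (restr CC B2)"
          "subscaf X B1 (restr SS B1) B2 (restr CC B2)"
          using 1(5) B1(1,2) by blast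
        show "\<exists>B\<in>minus_strat C CC. is_scaffold X \<beta> B (restr CC B) \<and>
             subscaf X B' (restr SS' B') B (restr CC B)"
          using B2 B1(4)[OF B2(3)] by blast
      qed
    qed
  qed
qed



lemma subscaf_sub: "subscaf X A AA B BB \<Longrightarrow> A \<subseteq> B"
  by (erule subscaf.cases) blast

lemma chain_mono:
  assumes h: "\<And>n. ordLeq2 (f n) (f (Suc n))" and mn: "m \<le> n"
  shows "ordLeq2 (f m) (f n)"
  using mn
proof (induction n rule: dec_induct)
  case base
  show ?case using ordLeq_reflexive ordLeq_Well_order_simp[OF h[of m]] by blast
next
  case (step k)
  show ?case using ordLeq_transitive[OF step.IH h[of k]] .
qed

lemma construct:
  assumes h1: "\<And>n. scaffold X (\<alpha>s n) (xs n) (Ss n) (SSs n)"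
    and h2: "\<And>n. ordLeq2 (\<alpha>s n) (\<alpha>s (Suc n))"
    and h3: "least_strict_ub \<alpha> \<alpha>s"
    and h4: "x \<in> topspace X"
    and h5: "limitin X xs x sequentially"
    and h6: "\<And>n. openin X (Us n)"
    and h7: "\<And>m n. m \<noteq> n \<Longrightarrow> Us m \<inter> Us n = {}"
    and h8: "\<And>n. X closure_of (Ss n) \<subseteq> Us n"
    and h9: "\<And>n. x \<notin> X closure_of (Us n)"
    and r: "strict_mono (r :: nat \<Rightarrow> nat)"
    and sc': "\<And>k. scaffold X (\<alpha>s (r k)) (xs (r k)) (S' k) (SS' k)"
    and sub': "\<And>k. subscaf X (S' k) (SS' k) (Ss (r k)) (SSs (r k))"
  shows "scaffold X \<alpha> x ({x} \<union> (\<Union>k. S' k)) ({{x} \<union> (\<Union>k. S' k)} \<union> (\<Union>k. SS' k))"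
    and "subscaf X ({x} \<union> (\<Union>k. S' k)) ({{x} \<union> (\<Union>k. S' k)} \<union> (\<Union>k. SS' k))
                   ({x} \<union> (\<Union>n. Ss n)) ({{x} \<union> (\<Union>n. Ss n)} \<union> (\<Union>n. SSs n))"
    and "minus_strat ({x} \<union> (\<Union>k. S' k)) ({{x} \<union> (\<Union>k. S' k)} \<union> (\<Union>k. SS' k)) = range S'"
proof -
  let ?A = "{x} \<union> (\<Union>n. Ss n)"
  let ?AA = "{?A} \<union> (\<Union>n. SSs n)"
  let ?A' = "{x} \<union> (\<Union>k. S' k)"
  let ?AA' = "{?A'} \<union> (\<Union>k. SS' k)"
  have sub: "S' k \<subseteq> Ss (r k)" for k using subscaf_sub[OF sub'[of k]] .
  have rne: "r m \<noteq> r n" if "m \<noteq> n" for m n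
    using r that by (metis strict_mono_eq)
  have mono': "ordLeq2 (\<alpha>s (r k)) (\<alpha>s (r (Suc k)))" for k
  proof -
    have "r k \<le> r (Suc k)" using r unfolding strict_mono_def by (metis lessI less_imp_le)
    then show ?thesis by (rule chain_mono[where f=\<alpha>s, OF h2])
  qed
  have lsub': "least_strict_ub \<alpha> (\<lambda>k. \<alpha>s (r k))"
  proof -
    have wo: "Well_order \<alpha>" and lt: "\<And>n. ordLess2 (\<alpha>s n) \<alpha>"
      and le: "\<And>\<beta>::nat rel. Well_order \<beta> \<Longrightarrow> (\<forall>n. ordLess2 (\<alpha>s n) \<beta>) \<Longrightarrow> ordLeq2 \<alpha> \<beta>"
      using h3 unfolding least_strict_ub_def by blast+
    have "ordLeq2 \<alpha> \<beta>" if "Well_order \<beta>" "\<forall>k. ordLess2 (\<alpha>s (r k)) \<beta>" for \<beta> :: "nat rel"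
    proof -
      have "ordLess2 (\<alpha>s n) \<beta>" for n
      proof -
        have "ordLeq2 (\<alpha>s n) (\<alpha>s (r n))" by (rule chain_mono[where f=\<alpha>s, OF h2 seq_suble[OF r]])
        then show ?thesis using that(2) ordLeq_ordLess_trans by blast
      qed
      then show ?thesis using le that(1) by blast
    qed
    then show ?thesis unfolding least_strict_ub_def using wo lt by blast
  qed
  have lim': "limitin X (\<lambda>k. xs (r k)) x sequentially"
    using limitin_subsequence[OF r h5] by (simp add: o_def)
  have op': "openin X (Us (r k))" for k by (rule h6)
  have dj': "Us (r m) \<inter> Us (r n) = {}" if "m \<noteq> n" for m n by (rule h7[OF rne[OF that]])
  have cl': "X closure_of (S' k) \<subseteq> Us (r k)" for k
    using closure_of_mono[OF sub[of k]] h8[of "r k"] by blast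
  have nx': "x \<notin> X closure_of (Us (r k))" for k by (rule h9)
  show SC: "scaffold X \<alpha> x ?A' ?AA'"
    apply (rule scaffold.step[where \<alpha>s="\<lambda>k. \<alpha>s (r k)" and xs="\<lambda>k. xs (r k)" and Ss=S' and SSs=SS'
          and \<alpha>=\<alpha> and x=x and Us="\<lambda>k. Us (r k)"])
    apply (rule sc')
    apply (rule mono')
    apply (rule lsub')
    apply (rule h4)
    apply (rule lim')
    apply (rule op')
    apply (erule dj')
    apply (rule cl')
    apply (rule nx')
    done
  have SC0: "scaffold X \<alpha> x ?A ?AA"
    by (rule scaffold.step[where \<alpha>s=\<alpha>s and xs=xs and Ss=Ss and SSs=SSs and \<alpha>=\<alpha> and x=x and Us=Us,
          OF h1 h2 h3 h4 h5 h6 h7 h8 h9])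
  note SF = step_facts[where X=X and \<alpha>s=\<alpha>s and xs=xs and Ss=Ss and SSs=SSs and Us=Us and x=x,
      OF h1 h6 h7 h8 h9]
  note SF' = step_facts[where X=X and \<alpha>s="\<lambda>k. \<alpha>s (r k)" and xs="\<lambda>k. xs (r k)" and Ss=S' and SSs=SS'
      and Us="\<lambda>k. Us (r k)" and x=x, OF sc' op' dj' cl' nx']
  show MS: "minus_strat ?A' ?AA' = range S'" by (rule SF'(1))
  show "subscaf X ?A' ?AA' ?A ?AA"
  proof (rule subscaf.intros)
    show "?A' \<subseteq> ?A" using sub by blast
    show "stratification X ?A' ?AA'" using SC unfolding stratification_def by blast
    show "cor X ?A' ?AA' = cor X ?A ?AA" using cor_eq[OF SC] cor_eq[OF SC0] by simp
    show "minus_strat ?A ?AA \<noteq> {} \<longrightarrow> minus_strat ?A' ?AA' \<noteq> {}" using MS by blast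
    show "\<forall>B'\<in>minus_strat ?A' ?AA'. \<forall>\<beta>. is_scaffold X \<beta> B' (restr ?AA' B') \<longrightarrow>
        (\<exists>B\<in>minus_strat ?A ?AA. is_scaffold X \<beta> B (restr ?AA B) \<and>
             subscaf X B' (restr ?AA' B') B (restr ?AA B))"
    proof (intro ballI allI impI)
      fix B' \<beta> assume b: "B' \<in> minus_strat ?A' ?AA'" and i: "is_scaffold X \<beta> B' (restr ?AA' B')"
      have "B' \<in> range S'" using b MS by metis
      then obtain k where k: "B' = S' k" by blast
      have e1: "restr ?AA' (S' k) = SS' k" by (rule SF'(2))
      have e2: "restr ?AA (Ss (r k)) = SSs (r k)" by (rule SF(2))
      have "is_scaffold X \<beta> (S' k) (SS' k)" using i k e1 by simp
      then obtain y where y: "scaffold X \<beta> y (S' k) (SS' k)" unfolding is_scaffold_def by blast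
      have "ordIso2 \<beta> (\<alpha>s (r k))" by (rule height_unique[OF y sc'[of k]])
      then have "scaffold X \<beta> (xs (r k)) (Ss (r k)) (SSs (r k))"
        by (rule scaf_transport[OF h1[of "r k"] ordIso_symmetric])
      then have i2: "is_scaffold X \<beta> (Ss (r k)) (restr ?AA (Ss (r k)))"
        unfolding e2 is_scaffold_def by blast
      have m2: "Ss (r k) \<in> minus_strat ?A ?AA" using SF(1) by (metis rangeI)
      have s2: "subscaf X B' (restr ?AA' B') (Ss (r k)) (restr ?AA (Ss (r k)))"
        unfolding k e1 e2 by (rule sub')
      show "\<exists>B\<in>minus_strat ?A ?AA. is_scaffold X \<beta> B (restr ?AA B) \<and>
             subscaf X B' (restr ?AA' B') B (restr ?AA B)"
        using m2 i2 s2 by blast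
    qed
  qed
qed



lemma choice2:
  assumes "\<forall>n. \<exists>a b. P n a b"
  shows "\<exists>f g. \<forall>n. P n (f n) (g n)"
proof -
  from assms have "\<forall>n. \<exists>p. P n (fst p) (snd p)" by auto
  from choice[OF this] obtain h where "\<forall>n. P n (fst (h n)) (snd (h n))" by blast
  then show ?thesis by (intro exI[of _ "\<lambda>n. fst (h n)"] exI[of _ "\<lambda>n. snd (h n)"]) simp
qed

lemma drop_children:
  assumes sa: "scaffold X \<alpha> y A AA"
  shows "\<exists>C::nat \<Rightarrow> 'a set. (\<forall>U. finite {T \<in> minus_strat A AA. \<not> T \<subseteq> U} \<longrightarrow> (\<exists>k. \<forall>j\<ge>k. C j \<subseteq> U)) \<and>
     (\<forall>k. \<exists>A' AA'. scaffold X \<alpha> y A' AA' \<and> subscaf X A' AA' A AA \<and> A' \<subseteq> {y} \<union> \<Union>(C ` {k..}))"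
  using sa
proof cases
  case zero
  have P2: "\<forall>k. \<exists>A' AA'. scaffold X \<alpha> y A' AA' \<and> subscaf X A' AA' A AA \<and> A' \<subseteq> {y} \<union> \<Union>((\<lambda>_::nat. {}::'a set) ` {k..})"
  proof
    fix k :: nat
    have "A \<subseteq> {y} \<union> \<Union>((\<lambda>_::nat. {}::'a set) ` {k..})" using zero(1) by simp
    then show "\<exists>A' AA'. scaffold X \<alpha> y A' AA' \<and> subscaf X A' AA' A AA \<and> A' \<subseteq> {y} \<union> \<Union>((\<lambda>_::nat. {}::'a set) ` {k..})"
      using sa scaf_refl[OF sa] by (intro exI[of _ A] exI[of _ AA] conjI)
  qed
  show ?thesis
    apply (rule exI[where x="\<lambda>_::nat. {}::'a set"])
    using P2 by simp
next
  case (step \<alpha>s xs Ss SSs Us)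
  note SF = step_facts[where X=X and \<alpha>s=\<alpha>s and xs=xs and Ss=Ss and SSs=SSs and Us=Us and x=y,
      OF step(3) step(8) step(9) step(10) step(11)]
  have "minus_strat A AA = minus_strat ({y} \<union> (\<Union>n. Ss n)) ({{y} \<union> (\<Union>n. Ss n)} \<union> (\<Union>n. SSs n))"
    by (rule arg_cong2[OF step(1) step(2)])
  then have MS: "minus_strat A AA = range Ss" using SF(1) by simp
  have P1: "\<forall>U. finite {T \<in> minus_strat A AA. \<not> T \<subseteq> U} \<longrightarrow> (\<exists>k. \<forall>j\<ge>k. Ss j \<subseteq> U)"
  proof (intro allI impI)
    fix U assume fin: "finite {T \<in> minus_strat A AA. \<not> T \<subseteq> U}"
    have "finite (Ss -` {T \<in> minus_strat A AA. \<not> T \<subseteq> U})" by (rule finite_vimageI[OF fin SF(3)])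
    moreover have "{j. \<not> Ss j \<subseteq> U} \<subseteq> Ss -` {T \<in> minus_strat A AA. \<not> T \<subseteq> U}" using MS by auto
    ultimately have "finite {j. \<not> Ss j \<subseteq> U}" by (rule finite_subset[rotated])
    then obtain k where "\<forall>j\<in>{j. \<not> Ss j \<subseteq> U}. j < k" unfolding finite_nat_set_iff_bounded by blast
    then have kk: "\<And>j. \<not> Ss j \<subseteq> U \<Longrightarrow> j < k" by blast
    show "\<exists>k. \<forall>j\<ge>k. Ss j \<subseteq> U"
    proof (intro exI[of _ k] allI impI)
      fix j assume "k \<le> j"
      then show "Ss j \<subseteq> U" using kk[of j] by linarith
    qed
  qed
  have P2: "\<forall>k. \<exists>A' AA'. scaffold X \<alpha> y A' AA' \<and> subscaf X A' AA' A AA \<and> A' \<subseteq> {y} \<union> \<Union>(Ss ` {k..})"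
  proof
    fix k :: nat
    have r: "strict_mono (\<lambda>j::nat. j + k)" unfolding strict_mono_def by simp
    have sc': "scaffold X (\<alpha>s (j + k)) (xs (j + k)) (Ss (j + k)) (SSs (j + k))" for j by (rule step(3))
    have sub': "subscaf X (Ss (j + k)) (SSs (j + k)) (Ss (j + k)) (SSs (j + k))" for j
      by (rule scaf_refl[OF step(3)])
    note CO = construct[where X=X and \<alpha>s=\<alpha>s and xs=xs and Ss=Ss and SSs=SSs and \<alpha>=\<alpha> and x=y and Us=Us
        and r="\<lambda>j. j + k" and S'="\<lambda>j. Ss (j + k)" and SS'="\<lambda>j. SSs (j + k)",
        OF step(3) step(4) step(5) step(6) step(7) step(8) step(9) step(10) step(11) r sc' sub']
    have s1: "subscaf X ({y} \<union> (\<Union>j. Ss (j + k))) ({{y} \<union> (\<Union>j. Ss (j + k))} \<union> (\<Union>j. SSs (j + k))) A AA"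
      unfolding step(1) step(2) by (rule CO(2))
    have s2: "{y} \<union> (\<Union>j. Ss (j + k)) \<subseteq> {y} \<union> \<Union>(Ss ` {k..})"
    proof (rule Un_mono[OF subset_refl], rule UN_least)
      fix j show "Ss (j + k) \<subseteq> \<Union>(Ss ` {k..})" by (rule UN_upper) simp
    qed
    show "\<exists>A' AA'. scaffold X \<alpha> y A' AA' \<and> subscaf X A' AA' A AA \<and> A' \<subseteq> {y} \<union> \<Union>(Ss ` {k..})"
      using CO(1) s1 s2 by (intro exI conjI)
  qed
  show ?thesis
    apply (rule exI[where x=Ss])
    using P1 P2 by (intro conjI)
qed



lemma main_lemma:
  assumes sa: "scaffold X \<alpha> x S SS"
    and opn: "\<forall>U \<in> \<U>. openin X U"
    and cb: "card_less_b \<U>"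
  shows "\<exists>S' SS'. scaffold X \<alpha> x S' SS' \<and> subscaf X S' SS' S SS \<and>
           (\<forall>U \<in> \<U>. x \<in> U \<longrightarrow> finite {T \<in> minus_strat S' SS'. \<not> T \<subseteq> U})"
  using sa
proof induction
  case (zero \<alpha> x)
  have sz: "scaffold X \<alpha> x {x} {{x}}" by (rule scaffold.zero[OF zero])
  have "minus_strat {x} {{x}} = {}" unfolding minus_strat_def by auto
  then have "\<forall>U \<in> \<U>. x \<in> U \<longrightarrow> finite {T \<in> minus_strat {x} {{x}}. \<not> T \<subseteq> U}" by simp
  then show ?case using sz scaf_refl[OF sz] by (intro exI conjI)
next
  case (step \<alpha>s xs Ss SSs \<alpha> x Us)
  have h1: "\<And>n. scaffold X (\<alpha>s n) (xs n) (Ss n) (SSs n)" by fact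
  have h2: "\<And>n. ordLeq2 (\<alpha>s n) (\<alpha>s (Suc n))" by fact
  have h3: "least_strict_ub \<alpha> \<alpha>s" by fact
  have h4: "x \<in> topspace X" by fact
  have h5: "limitin X xs x sequentially" by fact
  have h6: "\<And>n. openin X (Us n)" by fact
  have h7: "\<And>m n. m \<noteq> n \<Longrightarrow> Us m \<inter> Us n = {}" by fact
  have h8: "\<And>n. X closure_of (Ss n) \<subseteq> Us n" by fact
  have h9: "\<And>n. x \<notin> X closure_of (Us n)" by fact
  have h10: "\<And>n. \<exists>S' SS'. scaffold X (\<alpha>s n) (xs n) S' SS' \<and> subscaf X S' SS' (Ss n) (SSs n) \<and>
           (\<forall>U \<in> \<U>. xs n \<in> U \<longrightarrow> finite {T \<in> minus_strat S' SS'. \<not> T \<subseteq> U})" by fact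
  have "\<forall>n. \<exists>S' SS'. scaffold X (\<alpha>s n) (xs n) S' SS' \<and> subscaf X S' SS' (Ss n) (SSs n) \<and>
           (\<forall>U \<in> \<U>. xs n \<in> U \<longrightarrow> finite {T \<in> minus_strat S' SS'. \<not> T \<subseteq> U})"
    using h10 by blast
  from choice2[OF this] obtain S1 SS1 where S1: "\<forall>n. scaffold X (\<alpha>s n) (xs n) (S1 n) (SS1 n) \<and>
      subscaf X (S1 n) (SS1 n) (Ss n) (SSs n) \<and>
      (\<forall>U \<in> \<U>. xs n \<in> U \<longrightarrow> finite {T \<in> minus_strat (S1 n) (SS1 n). \<not> T \<subseteq> U})"
    by blast
  have S1a: "scaffold X (\<alpha>s n) (xs n) (S1 n) (SS1 n)" for n using S1 by blast
  have S1b: "subscaf X (S1 n) (SS1 n) (Ss n) (SSs n)" for n using S1 by blast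
  have S1c: "\<And>U. U \<in> \<U> \<Longrightarrow> xs n \<in> U \<Longrightarrow> finite {T \<in> minus_strat (S1 n) (SS1 n). \<not> T \<subseteq> U}" for n
    using S1 by blast
  have "\<forall>n. \<exists>C::nat \<Rightarrow> 'a set. (\<forall>U. finite {T \<in> minus_strat (S1 n) (SS1 n). \<not> T \<subseteq> U} \<longrightarrow> (\<exists>k. \<forall>j\<ge>k. C j \<subseteq> U)) \<and>
     (\<forall>k. \<exists>A' AA'. scaffold X (\<alpha>s n) (xs n) A' AA' \<and> subscaf X A' AA' (S1 n) (SS1 n) \<and> A' \<subseteq> {xs n} \<union> \<Union>(C ` {k..}))"
    using drop_children[OF S1a] by blast
  from choice[OF this] obtain C :: "nat \<Rightarrow> nat \<Rightarrow> 'a set" where C: "\<forall>n. (\<forall>U. finite {T \<in> minus_strat (S1 n) (SS1 n). \<not> T \<subseteq> U} \<longrightarrow> (\<exists>k. \<forall>j\<ge>k. C n j \<subseteq> U)) \<and>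
     (\<forall>k. \<exists>A' AA'. scaffold X (\<alpha>s n) (xs n) A' AA' \<and> subscaf X A' AA' (S1 n) (SS1 n) \<and> A' \<subseteq> {xs n} \<union> \<Union>(C n ` {k..}))"
    by blast
  have Ca: "\<And>U. finite {T \<in> minus_strat (S1 n) (SS1 n). \<not> T \<subseteq> U} \<Longrightarrow> (\<exists>k. \<forall>j\<ge>k. C n j \<subseteq> U)" for n
    using C by blast
  define G where "G U n = (if xs n \<in> U then (LEAST k. \<forall>j\<ge>k. C n j \<subseteq> U) else 0)" for U n
  let ?V = "{U \<in> \<U>. x \<in> U}"
  have "\<exists>g. \<forall>U\<in>?V. ev_dom (G U) g"
  proof (rule ccontr)
    assume nb: "\<not> (\<exists>g. \<forall>U\<in>?V. ev_dom (G U) g)"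
    have "unbounded_family (G ` ?V)" unfolding unbounded_family_def using nb by blast
    then have lt: "ordLess2 (card_of \<U>) (card_of (G ` ?V))" using cb unfolding card_less_b_def by blast
    have "ordLeq2 (card_of (G ` ?V)) (card_of ?V)" by (rule card_of_image)
    moreover have "ordLeq2 (card_of ?V) (card_of \<U>)" by (rule card_of_mono1) blast
    ultimately have "ordLeq2 (card_of (G ` ?V)) (card_of \<U>)" by (rule ordLeq_transitive)
    then show False using not_ordLess_ordLeq[OF lt] by blast
  qed
  then obtain g where g: "\<forall>U\<in>?V. ev_dom (G U) g" by blast
  have "\<forall>n. \<exists>A' AA'. scaffold X (\<alpha>s n) (xs n) A' AA' \<and> subscaf X A' AA' (S1 n) (SS1 n) \<and> A' \<subseteq> {xs n} \<union> \<Union>(C n ` {g n..})"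
    using C by blast
  from choice2[OF this] obtain S2 SS2 where S2: "\<forall>n. scaffold X (\<alpha>s n) (xs n) (S2 n) (SS2 n) \<and>
     subscaf X (S2 n) (SS2 n) (S1 n) (SS1 n) \<and> S2 n \<subseteq> {xs n} \<union> \<Union>(C n ` {g n..})"
    by blast
  have S2a: "scaffold X (\<alpha>s n) (xs n) (S2 n) (SS2 n)" for n using S2 by blast
  have S2b: "subscaf X (S2 n) (SS2 n) (Ss n) (SSs n)" for n
    using subscaf_trans[of X "S2 n" "SS2 n" "S1 n" "SS1 n" "Ss n" "SSs n"] S2 S1b by blast
  have S2c: "S2 n \<subseteq> {xs n} \<union> \<Union>(C n ` {g n..})" for n using S2 by blast
  have rid: "strict_mono (\<lambda>k::nat. k)" unfolding strict_mono_def by simp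
  note CO = construct[where X=X and \<alpha>s=\<alpha>s and xs=xs and Ss=Ss and SSs=SSs and \<alpha>=\<alpha> and x=x and Us=Us
        and r="\<lambda>k. k" and S'=S2 and SS'=SS2, OF h1 h2 h3 h4 h5 h6 h7 h8 h9 rid S2a S2b]
  let ?A' = "{x} \<union> (\<Union>k. S2 k)"
  let ?AA' = "{?A'} \<union> (\<Union>k. SS2 k)"
  have fin: "finite {T \<in> minus_strat ?A' ?AA'. \<not> T \<subseteq> U}" if U: "U \<in> \<U>" "x \<in> U" for U
  proof -
    have oU: "openin X U" using opn U(1) by blast
    obtain N1 where N1: "\<forall>n. N1 \<le> n \<longrightarrow> xs n \<in> U"
      using h5 oU U(2) unfolding limitin_sequentially by blast
    have "ev_dom (G U) g" using g U by blast
    then obtain N2 where N2: "\<forall>n. N2 \<le> n \<longrightarrow> G U n \<le> g n"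
      unfolding ev_dom_def eventually_sequentially by blast
    have good: "S2 n \<subseteq> U" if n: "max N1 N2 \<le> n" for n
    proof -
      have xn: "xs n \<in> U" using N1 n by simp
      have "finite {T \<in> minus_strat (S1 n) (SS1 n). \<not> T \<subseteq> U}" by (rule S1c[OF U(1) xn])
      then have ex: "\<exists>k. \<forall>j\<ge>k. C n j \<subseteq> U" by (rule Ca)
      have L: "\<forall>j\<ge>(LEAST k. \<forall>j\<ge>k. C n j \<subseteq> U). C n j \<subseteq> U" by (rule LeastI_ex[OF ex])
      have e: "G U n = (LEAST k. \<forall>j\<ge>k. C n j \<subseteq> U)" unfolding G_def using xn by simp
      have le: "G U n \<le> g n" using N2 n by simp
      have "\<forall>j\<ge>g n. C n j \<subseteq> U"
      proof (intro allI impI)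
        fix j assume "g n \<le> j"
        then have "(LEAST k. \<forall>j\<ge>k. C n j \<subseteq> U) \<le> j" using e le by linarith
        then show "C n j \<subseteq> U" using L by blast
      qed
      then have "\<Union>(C n ` {g n..}) \<subseteq> U" by auto
      then show ?thesis using S2c[of n] xn by blast
    qed
    have "{T \<in> minus_strat ?A' ?AA'. \<not> T \<subseteq> U} \<subseteq> S2 ` {..<max N1 N2}"
    proof
      fix T assume T: "T \<in> {T \<in> minus_strat ?A' ?AA'. \<not> T \<subseteq> U}"
      then have "T \<in> minus_strat ?A' ?AA'" by blast
      then have "T \<in> range S2" using CO(3) by metis
      then obtain n where n: "T = S2 n" by blast
      have "\<not> max N1 N2 \<le> n" using good[of n] T n by blast
      then show "T \<in> S2 ` {..<max N1 N2}" using n by auto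
    qed
    then show ?thesis by (rule finite_subset) simp
  qed
  show ?case
  proof (intro exI[of _ ?A'] exI[of _ ?AA'] conjI)
    show "scaffold X \<alpha> x ?A' ?AA'" by (rule CO(1))
    show "subscaf X ?A' ?AA' ({x} \<union> (\<Union>n. Ss n)) ({{x} \<union> (\<Union>n. Ss n)} \<union> (\<Union>n. SSs n))" by (rule CO(2))
    show "\<forall>U \<in> \<U>. x \<in> U \<longrightarrow> finite {T \<in> minus_strat ?A' ?AA'. \<not> T \<subseteq> U}" using fin by blast
  qed
qed

theorem lemma12:
  fixes X :: "'a topology" and \<alpha> :: "nat rel" and x :: 'a
    and S :: "'a set" and SS :: "'a set set" and \<U> :: "'a set set"
  assumes "scaffold X \<alpha> x S SS"
    and "\<forall>U \<in> \<U>. openin X U"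
    and "card_less_b \<U>"
  shows "\<exists>S' SS'. subscaf X S' SS' S SS \<and>
           (\<forall>U \<in> \<U>. cor X S' SS' \<in> U \<longrightarrow> finite {T \<in> minus_strat S' SS'. \<not> T \<subseteq> U})"
proof -
  obtain S' SS' where a: "scaffold X \<alpha> x S' SS'" and b: "subscaf X S' SS' S SS"
    and c: "\<forall>U \<in> \<U>. x \<in> U \<longrightarrow> finite {T \<in> minus_strat S' SS'. \<not> T \<subseteq> U}"
    using main_lemma[OF assms] by blast
  have "cor X S' SS' = x" by (rule cor_eq[OF a])
  then show ?thesis using b c by auto
qed

end
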